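(* Let $F$ be a finite group of order $n$. There is an embedding of $F$ into the alternating group $\mathrm{Alt}(2n+3)$ such that $\mathrm{Alt}(2n+3)$ is generated by the $F$-conjugates of $\mathrm{Alt}(5)$.
   Context: $\mathrm{Alt}(m)$ is the alternating group on $\{1,\dots,m\}$; for $k<m$, $\mathrm{Alt}(k)$ is identified with the subgroup of $\mathrm{Alt}(m)$ consisting of even permutations of $\{1,\dots,k\}$ (fixing all points greater than $k$). *)

theory Defs
  imports "HOL-Algebra.Sym_Groups" "HOL-Algebra.Generated_Groups"
begin

end

theory Submission
  imports Defs
begin

abbreviation C3 :: "nat \<Rightarrow> nat \<Rightarrow> nat \<Rightarrow> nat \<Rightarrow> nat" where
  "C3 a b c \<equiv> cycle_of_list [a, b, c]"

lemma C3_eq: "distinct [a,b,c] \<Longrightarrow> C3 a b c = (\<lambda>x. if x = a then b else if x = b then c else if x = c then a else x)"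
  by (rule ext) (auto simp: transpose_def)

lemma C3_rot: assumes "distinct [a,b,c]" shows "C3 a b c = C3 b c a"
proof -
  have d: "distinct [b,c,a]" using assms by auto
  have e: "a \<noteq> b" "a \<noteq> c" "b \<noteq> c" using assms by auto
  note e' = e e[symmetric]
  show ?thesis unfolding C3_eq[OF assms] C3_eq[OF d] by (intro ext) (simp add: e')
qed

lemma C3_conj1: assumes "distinct [p,q,r,s]" shows "C3 q r s = C3 p q r \<circ> C3 p q s \<circ> C3 p q r \<circ> C3 p q r"
proof -
  have d: "distinct [q,r,s]" "distinct [p,q,r]" "distinct [p,q,s]" using assms by auto
  have e: "p \<noteq> q" "p \<noteq> r" "p \<noteq> s" "q \<noteq> r" "q \<noteq> s" "r \<noteq> s" using assms by auto
  note e' = e e[symmetric]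
  show ?thesis unfolding C3_eq[OF d(1)] C3_eq[OF d(2)] C3_eq[OF d(3)] by (intro ext) (simp add: e')
qed

lemma C3_conj2: assumes "distinct [p,q,r,s,t]" shows "C3 r s t = C3 p q r \<circ> C3 q s t \<circ> C3 p q r \<circ> C3 p q r"
proof -
  have d: "distinct [r,s,t]" "distinct [p,q,r]" "distinct [q,s,t]" using assms by auto
  have e: "p \<noteq> q" "p \<noteq> r" "p \<noteq> s" "p \<noteq> t" "q \<noteq> r" "q \<noteq> s" "q \<noteq> t" "r \<noteq> s" "r \<noteq> t" "s \<noteq> t"
    using assms by auto
  note e' = e e[symmetric]
  show ?thesis unfolding C3_eq[OF d(1)] C3_eq[OF d(2)] C3_eq[OF d(3)] by (intro ext) (simp add: e')
qed

locale regemb = group F for F (structure) +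
  fixes n :: nat and h :: "nat \<Rightarrow> 'a"
  assumes hbij: "bij_betw h {..<n} (carrier F)"
begin

definition idx :: "'a \<Rightarrow> nat" where "idx g = the_inv_into {..<n} h g"

lemma idx_lt: "g \<in> carrier F \<Longrightarrow> idx g < n"
  unfolding idx_def using hbij
  by (metis bij_betw_def lessThan_iff the_inv_into_into subset_refl)

lemma h_idx: "g \<in> carrier F \<Longrightarrow> h (idx g) = g"
  unfolding idx_def using hbij by (metis bij_betw_def f_the_inv_into_f)

lemma idx_h: "i < n \<Longrightarrow> idx (h i) = i"
  unfolding idx_def using hbij by (simp add: bij_betw_def the_inv_into_f_f)

lemma h_in: "i < n \<Longrightarrow> h i \<in> carrier F"
  using hbij by (auto simp: bij_betw_def)

definition psi :: "nat set \<Rightarrow> 'a \<Rightarrow> nat \<Rightarrow> nat" where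
  "psi R f x = (if 4 \<le> x \<and> x < 2*n+4 \<and> (x-4) mod 2 \<in> R
     then 4 + 2 * idx (f \<otimes> h ((x-4) div 2)) + (x-4) mod 2 else x)"

lemma decode:
  assumes "4 \<le> x" "x < 2*n+4"
  obtains i r where "i < n" "r < 2" "x = 4 + 2*i + r"
proof -
  have "x = 4 + 2*((x-4) div 2) + (x-4) mod 2" using assms by simp
  moreover have "(x-4) div 2 < n" using assms by auto
  ultimately show ?thesis using that by (metis mod_less_divisor zero_less_numeral)
qed

lemma psi_at:
  assumes "i < n" "r < (2::nat)"
  shows "psi R f (4+2*i+r) = (if r \<in> R then 4 + 2*idx (f \<otimes> h i) + r else 4+2*i+r)"
  using assms unfolding psi_def by auto

lemma decode2:
  assumes "4 \<le> x" "x < 2*n+4"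
  obtains i where "i < n" "x = 4 + 2*i \<or> x = 5 + 2*i"
proof -
  obtain i r where "i < n" "r < 2" "x = 4 + 2*i + r" using decode assms by blast
  then show ?thesis using that by (cases r) auto
qed

lemma psi_at0: "i < n \<Longrightarrow> psi R f (4+2*i) = (if 0 \<in> R then 4 + 2*idx (f \<otimes> h i) else 4+2*i)"
  using psi_at[of i 0 R f] by simp

lemma psi_at1: "i < n \<Longrightarrow> psi R f (5+2*i) = (if 1 \<in> R then 5 + 2*idx (f \<otimes> h i) else 5+2*i)"
  using psi_at[of i 1 R f] by simp

lemma psi_out: "\<not> (4 \<le> x \<and> x < 2*n+4) \<Longrightarrow> psi R f x = x"
  unfolding psi_def by auto

lemma psi_mult:
  assumes f: "f \<in> carrier F" and g: "g \<in> carrier F"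
  shows "psi R (f \<otimes> g) x = psi R f (psi R g x)"
proof (cases "4 \<le> x \<and> x < 2*n+4")
  case True
  then obtain i r where ir: "i < n" "r < 2" "x = 4 + 2*i + r" using decode by blast
  have gi: "g \<otimes> h i \<in> carrier F" using g h_in ir by auto
  show ?thesis using ir f g gi
    by (simp add: psi_at idx_lt h_idx m_assoc h_in)
next
  case False
  then show ?thesis by (simp add: psi_out)
qed

lemma psi_one: "psi R \<one> x = x"
proof (cases "4 \<le> x \<and> x < 2*n+4")
  case True
  then obtain i r where ir: "i < n" "r < 2" "x = 4 + 2*i + r" using decode by blast
  then show ?thesis by (simp add: psi_at h_in idx_h)
qed (simp add: psi_out)

lemma psi_inv1: "f \<in> carrier F \<Longrightarrow> psi R f (psi R (inv f) x) = x"
  by (metis psi_mult inv_closed r_inv psi_one)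

lemma psi_inv2: "f \<in> carrier F \<Longrightarrow> psi R (inv f) (psi R f x) = x"
  by (metis psi_mult inv_closed l_inv psi_one)

lemma psi_bij: "f \<in> carrier F \<Longrightarrow> bij (psi R f)"
  unfolding bij_iff by (metis psi_inv1 psi_inv2)


lemma psi_permutes: "f \<in> carrier F \<Longrightarrow> psi R f permutes {4..<2*n+4}"
  unfolding permutes_def using psi_bij[unfolded bij_iff] psi_out by auto

definition tau :: "nat \<Rightarrow> nat" where
  "tau x = (if 4 \<le> x \<and> x < 2*n+4 then (if even (x-4) then x+1 else x-1) else x)"

lemma tau_at0: "i < n \<Longrightarrow> tau (4+2*i) = 5+2*i"
  unfolding tau_def by auto
lemma tau_at1: "i < n \<Longrightarrow> tau (5+2*i) = 4+2*i"
  unfolding tau_def by auto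

lemma tau_out: "\<not> (4 \<le> x \<and> x < 2*n+4) \<Longrightarrow> tau x = x"
  unfolding tau_def by auto

lemma tau_tau: "tau (tau x) = x"
proof (cases "4 \<le> x \<and> x < 2*n+4")
  case True
  then obtain i where ir: "i < n" "x = 4 + 2*i \<or> x = 5 + 2*i" using decode2 by blast
  then show ?thesis by (auto simp add: tau_at0 tau_at1)
qed (simp add: tau_out)

lemma tau_permutes: "tau permutes {4..<2*n+4}"
  unfolding permutes_def using tau_out tau_tau by (metis atLeastLessThan_iff)

lemma psi1_conj: "f \<in> carrier F \<Longrightarrow> psi {1} f = tau \<circ> psi {0} f \<circ> tau"
proof
  fix x assume f: "f \<in> carrier F"
  show "psi {1} f x = (tau \<circ> psi {0} f \<circ> tau) x"
  proof (cases "4 \<le> x \<and> x < 2*n+4")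
    case True
    then obtain i where ir: "i < n" "x = 4 + 2*i \<or> x = 5 + 2*i" using decode2 by blast
    have "idx (f \<otimes> h i) < n" using f ir h_in idx_lt by auto
    then show ?thesis using ir
      by (auto simp add: tau_at0 tau_at1 psi_at0 psi_at1)
  qed (simp add: tau_out psi_out)
qed

lemma psi01: "f \<in> carrier F \<Longrightarrow> psi {0,1} f = psi {0} f \<circ> psi {1} f"
proof
  fix x assume f: "f \<in> carrier F"
  show "psi {0,1} f x = (psi {0} f \<circ> psi {1} f) x"
  proof (cases "4 \<le> x \<and> x < 2*n+4")
    case True
    then obtain i where ir: "i < n" "x = 4 + 2*i \<or> x = 5 + 2*i" using decode2 by blast
    have "idx (f \<otimes> h i) < n" using f ir h_in idx_lt by auto
    then show ?thesis using ir
      by (auto simp add: psi_at0 psi_at1)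
  qed (simp add: psi_out)
qed

lemma psi_perm: "f \<in> carrier F \<Longrightarrow> permutation (psi R f)"
  using psi_permutes permutation_permutes by blast

lemma tau_perm: "permutation tau"
  using tau_permutes permutation_permutes by blast

lemma psi_even: "f \<in> carrier F \<Longrightarrow> evenperm (psi {0,1} f)"
  unfolding psi01 psi1_conj
  by (auto simp add: evenperm_comp psi_perm tau_perm permutation_compose)

abbreviation phi where "phi \<equiv> psi {0,1}"
abbreviation GG where "GG \<equiv> alt_group (2*n+3)"

lemma phi_carrier: "f \<in> carrier F \<Longrightarrow> phi f \<in> carrier GG"
proof -
  assume f: "f \<in> carrier F"
  have "{4..<2*n+4} \<subseteq> {1..2*n+3}" by auto
  then have "phi f permutes {1..2*n+3}" using permutes_subset psi_permutes[OF f] by blast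
  then show ?thesis unfolding alt_group_carrier using psi_even[OF f] by simp
qed

lemma phi_hom: "phi \<in> hom F GG"
  unfolding hom_def alt_group_mult using phi_carrier psi_mult by (auto intro!: ext)

lemma phi_4: "f \<in> carrier F \<Longrightarrow> 0 < n \<Longrightarrow> phi f 4 = 4 + 2 * idx (f \<otimes> h 0)"
  using psi_at0[of 0 "{0,1}" f] by simp

lemma phi_5: "f \<in> carrier F \<Longrightarrow> 0 < n \<Longrightarrow> phi f 5 = 5 + 2 * idx (f \<otimes> h 0)"
  using psi_at1[of 0 "{0,1}" f] by simp

lemma phi_inj: "0 < n \<Longrightarrow> inj_on phi (carrier F)"
proof (rule inj_onI)
  fix f g assume f: "f \<in> carrier F" and g: "g \<in> carrier F" and n: "0 < n" and e: "phi f = phi g"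
  have "idx (f \<otimes> h 0) = idx (g \<otimes> h 0)" using phi_4[OF f n] phi_4[OF g n] e by simp
  then have "h (idx (f \<otimes> h 0)) = h (idx (g \<otimes> h 0))" by simp
  then have "f \<otimes> h 0 = g \<otimes> h 0" using f g n h_in h_idx by simp
  then show "f = g" using f g n h_in by simp
qed

lemma phi_id1: "f \<in> carrier F \<Longrightarrow> phi f \<circ> phi (inv f) = id"
  using psi_inv1 by (auto intro!: ext)

lemma phi_id2: "f \<in> carrier F \<Longrightarrow> phi (inv f) \<circ> phi f = id"
  using psi_inv2 by (auto intro!: ext)

definition SS where "SS = (\<Union>f \<in> carrier F. (\<lambda>\<sigma>. phi f \<otimes>\<^bsub>GG\<^esub> \<sigma>
                  \<otimes>\<^bsub>GG\<^esub> inv\<^bsub>GG\<^esub> (phi f)) ` carrier (alt_group 5))"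

lemma L1:
  assumes n: "0 < n" and j: "j < n" and d: "distinct [a,b,c]"
    and sub: "{a,b,c} \<subseteq> {1,2,3,4+2*j,5+2*j}"
  shows "C3 a b c \<in> SS"
proof -
  interpret G: group GG by (rule alt_group_is_group)
  define f where "f = h j \<otimes> inv (h 0)"
  have f: "f \<in> carrier F" unfolding f_def using h_in n j by auto
  have fh: "f \<otimes> h 0 = h j" unfolding f_def using h_in n j by (simp add: m_assoc)
  have p4: "phi f 4 = 4 + 2*j" using phi_4[OF f n] fh idx_h j by simp
  have p5: "phi f 5 = 5 + 2*j" using phi_5[OF f n] fh idx_h j by simp
  have plow: "x \<le> 3 \<Longrightarrow> phi f x = x" for x by (simp add: psi_out)
  define cc where "cc = C3 a b c"
  have ccG: "cc \<in> carrier GG"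
    using three_cycles_incl[of "2*n+3"] d sub j unfolding cc_def by fastforce
  then have cce: "evenperm cc" and ccp: "permutation cc" 
    using alt_group_carrier alt_group_carrier' by auto
  have ccfix: "x \<notin> {a,b,c} \<Longrightarrow> cc x = x" for x unfolding cc_def C3_eq[OF d] by auto
  define \<sigma> where "\<sigma> = phi (inv f) \<circ> cc \<circ> phi f"
  have finv: "inv f \<in> carrier F" using f by simp
  have outside: "phi f x \<notin> {1,2,3,4+2*j,5+2*j}" if "x \<notin> {1..5}" for x
  proof
    assume A: "phi f x \<in> {1,2,3,4+2*j,5+2*j}"
    have eq: "{1,2,3,4+2*j,5+2*j} = phi f ` {1..5}"
    proof -
      have "{1..5::nat} = {1,2,3,4,5}" by auto
      then show ?thesis using p4 p5 plow[of 1] plow[of 2] plow[of 3] by simp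
    qed
    have "phi f x \<in> phi f ` {1..5}" using A unfolding eq .
    then obtain y where y: "y \<in> {1..5}" "phi f x = phi f y" by (metis imageE)
    then have "x = y" using psi_inv2[OF f, of "{0,1}"] by metis
    then show False using that y by simp
  qed
  have sfix: "\<sigma> x = x" if "x \<notin> {1..5}" for x
  proof -
    have "cc (phi f x) = phi f x" using outside[OF that] sub ccfix by blast
    then show ?thesis unfolding \<sigma>_def using psi_inv2[OF f] by simp
  qed
  have "bij \<sigma>" unfolding \<sigma>_def
    using psi_bij[OF f] psi_bij[OF finv] permutation_bijective[OF ccp] by (simp add: bij_comp)
  then have sperm: "\<sigma> permutes {1..5}"
    unfolding permutes_def bij_iff using sfix by blast
  have "evenperm \<sigma>" unfolding \<sigma>_def
    using cce psi_even[OF f] psi_even[OF finv] psi_perm[OF f] psi_perm[OF finv] ccp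
    by (simp add: evenperm_comp permutation_compose)
  then have s5: "\<sigma> \<in> carrier (alt_group 5)" using sperm alt_group_carrier by blast
  have invG: "inv\<^bsub>GG\<^esub> (phi f) = phi (inv f)"
    using G.inv_equality[of "phi (inv f)" "phi f"] phi_carrier[OF f] phi_carrier[OF finv] phi_id2[OF f]
    by (simp add: alt_group_mult alt_group_one)
  have "phi f \<otimes>\<^bsub>GG\<^esub> \<sigma> \<otimes>\<^bsub>GG\<^esub> inv\<^bsub>GG\<^esub> (phi f) = cc"
  proof -
    have "phi f \<otimes>\<^bsub>GG\<^esub> \<sigma> \<otimes>\<^bsub>GG\<^esub> inv\<^bsub>GG\<^esub> (phi f) = phi f \<circ> (phi (inv f) \<circ> cc \<circ> phi f) \<circ> phi (inv f)"
      by (simp only: invG alt_group_mult \<sigma>_def)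
    also have "\<dots> = (phi f \<circ> phi (inv f)) \<circ> cc \<circ> (phi f \<circ> phi (inv f))"
      by (simp only: comp_assoc)
    also have "\<dots> = cc" by (simp only: phi_id1[OF f] id_comp comp_id)
    finally show ?thesis .
  qed
  then show ?thesis unfolding SS_def cc_def
    by (intro UN_I[OF f] image_eqI[OF sym s5])
qed


abbreviation HH where "HH \<equiv> generate GG SS"

lemma HH_mult: "p \<in> HH \<Longrightarrow> q \<in> HH \<Longrightarrow> p \<circ> q \<in> HH"
  using generate.eng[of p GG SS q] by (simp add: alt_group_mult)

lemma L1':
  assumes n: "0 < n" and d: "distinct [a,b,c]" and a: "a \<in> {1,2,3}" and b: "b \<in> {1,2,3}"
    and c: "c \<in> {1..2*n+3}"
  shows "C3 a b c \<in> HH"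
proof -
  obtain j where j: "j < n" "c \<in> {1,2,3,4+2*j,5+2*j}"
  proof (cases "c \<le> 3")
    case True
    then have "c \<in> {1,2,3,4+2*0,5+2*0}" using c by auto
    then show ?thesis using that n by blast
  next
    case False
    then have "4 \<le> c" "c < 2*n+4" using c by auto
    then obtain j where "j < n" "c = 4 + 2*j \<or> c = 5 + 2*j" using decode2 by blast
    then show ?thesis using that by blast
  qed
  have "{a,b,c} \<subseteq> {1,2,3,4+2*j,5+2*j}" using a b j(2) by blast
  then have "C3 a b c \<in> SS" by (rule L1[OF n j(1) d])
  then show ?thesis by (rule generate.incl)
qed

lemma L2:
  assumes n: "0 < n" and x: "x \<in> {1,2,3}" and u: "u \<in> {4..2*n+3}" and v: "v \<in> {4..2*n+3}" and uv: "u \<noteq> v"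
  shows "C3 x u v \<in> HH"
proof -
  define y where "y = (if x = 1 then 2 else (1::nat))"
  have y: "y \<in> {1,2,3}" "y \<noteq> x" unfolding y_def using x by auto
  have d: "distinct [y,x,u,v]" using x y u v uv by auto
  have "C3 y x u \<in> HH" by (rule L1'[OF n]) (use d x y u in auto)
  moreover have "C3 y x v \<in> HH" by (rule L1'[OF n]) (use d x y v in auto)
  ultimately show ?thesis unfolding C3_conj1[OF d] by (intro HH_mult)
qed

lemma L3:
  assumes n: "0 < n" and a: "a \<in> {4..2*n+3}" and b: "b \<in> {4..2*n+3}" and c: "c \<in> {4..2*n+3}"
    and d: "distinct [a,b,c]"
  shows "C3 a b c \<in> HH"
proof -
  have d: "distinct [1,2,a,b,c]" using a b c d by auto
  have "C3 1 2 a \<in> HH" by (rule L1'[OF n]) (use d a in auto)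
  moreover have "C3 2 b c \<in> HH" by (rule L2[OF n]) (use d b c in auto)
  ultimately show ?thesis unfolding C3_conj2[OF d] by (intro HH_mult)
qed

lemma Lall:
  assumes n: "0 < n" and d: "distinct [a,b,c]" and s: "{a,b,c} \<subseteq> {1..2*n+3}"
  shows "C3 a b c \<in> HH"
proof -
  have r1: "C3 a b c = C3 b c a" using C3_rot[OF d] .
  have d2: "distinct [b,c,a]" using d by auto
  have r2: "C3 a b c = C3 c a b" using C3_rot[OF d2] r1 by simp
  have d3: "distinct [c,a,b]" using d by auto
  consider (A) "a \<le> 3" "b \<le> 3" | (B) "a \<le> 3" "c \<le> 3" | (C) "b \<le> 3" "c \<le> 3"
    | (D) "a \<le> 3" "b > 3" "c > 3" | (E) "b \<le> 3" "a > 3" "c > 3" | (F) "c \<le> 3" "a > 3" "b > 3"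
    | (G) "a > 3" "b > 3" "c > 3" by linarith
  then show ?thesis
  proof cases
    case A show ?thesis by (rule L1'[OF n d]) (use s A in auto)
  next
    case B show ?thesis unfolding r2 by (rule L1'[OF n d3]) (use s B in auto)
  next
    case C show ?thesis unfolding r1 by (rule L1'[OF n d2]) (use s C in auto)
  next
    case D show ?thesis by (rule L2[OF n]) (use s d D in auto)
  next
    case E show ?thesis unfolding r1 by (rule L2[OF n]) (use s d E in auto)
  next
    case F show ?thesis unfolding r2 by (rule L2[OF n]) (use s d F in auto)
  next
    case G show ?thesis by (rule L3[OF n]) (use s d G in auto)
  qed
qed

lemma SS_sub: "SS \<subseteq> carrier GG"
proof -
  interpret G: group GG by (rule alt_group_is_group)
  show ?thesis unfolding SS_def
  proof (intro UN_least image_subsetI)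
    fix f \<sigma> assume f: "f \<in> carrier F" and s: "\<sigma> \<in> carrier (alt_group 5)"
    have "0 < n" using f idx_lt by fastforce
    then have "\<sigma> \<in> carrier GG" using s unfolding alt_group_carrier
      by (auto intro: permutes_subset)
    then show "phi f \<otimes>\<^bsub>GG\<^esub> \<sigma> \<otimes>\<^bsub>GG\<^esub> inv\<^bsub>GG\<^esub> (phi f) \<in> carrier GG"
      using phi_carrier[OF f] by simp
  qed
qed

lemma HH_all: "0 < n \<Longrightarrow> HH = carrier GG"
proof -
  assume n: "0 < n"
  interpret G: group GG by (rule alt_group_is_group)
  show ?thesis
  proof
    show "HH \<subseteq> carrier GG" using G.generate_incl[OF SS_sub] .
  next
    have "three_cycles (2*n+3) \<subseteq> HH"
    proof
      fix p assume "p \<in> three_cycles (2*n+3)"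
      then obtain cs where cs: "p = cycle_of_list cs" "cycle cs" "length cs = 3" "set cs \<subseteq> {1..2*n+3}"
        by auto
      obtain a b c where "cs = [a,b,c]" using stupid_lemma[OF cs(3)] by auto
      then show "p \<in> HH" using cs Lall[OF n, of a b c] by simp
    qed
    then have "generate GG (three_cycles (2*n+3)) \<subseteq> HH"
      using G.generate_subgroup_incl G.generate_is_subgroup[OF SS_sub] by blast
    then show "carrier GG \<subseteq> HH" using alt_group_carrier_as_three_cycles by blast
  qed
qed

end

theorem lemma3p2:
  fixes F :: "('a, 'b) monoid_scheme" and n :: nat
  assumes "group F" and "finite (carrier F)" and "order F = n"
  shows "\<exists>\<phi>. \<phi> \<in> hom F (alt_group (2 * n + 3)) \<and> inj_on \<phi> (carrier F) \<and>
           generate (alt_group (2 * n + 3))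
             (\<Union>f \<in> carrier F. (\<lambda>\<sigma>. \<phi> f \<otimes>\<^bsub>alt_group (2 * n + 3)\<^esub> \<sigma>
                  \<otimes>\<^bsub>alt_group (2 * n + 3)\<^esub> inv\<^bsub>alt_group (2 * n + 3)\<^esub> (\<phi> f))
                ` carrier (alt_group 5))
           = carrier (alt_group (2 * n + 3))"
proof -
  obtain h where hb: "bij_betw h {0..<card (carrier F)} (carrier F)"
    using ex_bij_betw_nat_finite[OF assms(2)] by blast
  then have hb': "bij_betw h {..<n} (carrier F)"
    using assms(3) unfolding order_def by (simp add: atLeast0LessThan)
  interpret R: regemb F n h
    by (intro regemb.intro regemb_axioms.intro assms(1) hb')
  have n: "0 < n"
    using assms(2,3) group.subgroup_self[OF assms(1)] subgroup.one_closed
    unfolding order_def by (metis card_gt_0_iff empty_iff)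
  have e: "generate (alt_group (2 * n + 3))
             (\<Union>f \<in> carrier F. (\<lambda>\<sigma>. R.psi {0,1} f \<otimes>\<^bsub>alt_group (2 * n + 3)\<^esub> \<sigma>
                  \<otimes>\<^bsub>alt_group (2 * n + 3)\<^esub> inv\<^bsub>alt_group (2 * n + 3)\<^esub> (R.psi {0,1} f))
                ` carrier (alt_group 5))
           = carrier (alt_group (2 * n + 3))"
    using R.HH_all[OF n] unfolding R.SS_def .
  show ?thesis
    apply (rule exI[of _ "R.psi {0,1}"])
    using R.phi_hom R.phi_inj[OF n] e by (intro conjI)
qed

end
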